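(* Any probability density $p$ on $\mathbb R$ of bounded total variation can be represented as a convex mixture of uniform densities, i.e. there is a Borel probability measure $\pi$ on the half-plane $\{(a,b)\in\mathbb R^2:b>a\}$ such that $$p(x)=\int\frac{1}{b-a}1_{\{a<x<b\}}\,d\pi(a,b)\quad\text{for a.e. }x,$$ and moreover $$\|p\|_{TV}=\int\|q_{a,b}\|_{TV}\,d\pi(a,b)=2\int\frac{1}{b-a}\,d\pi(a,b),$$ where $q_{a,b}=\frac1{b-a}1_{(a,b)}$.
   Context: $\|p\|_{TV}=\sup\sum_{k=1}^n|p(x_k)-p(x_{k-1})|$ over finite $x_0<\dots<x_n$, with the convention that each $p(x)$ lies in the closed segment between $p(x-)$ and $p(x+)$. *)

theory Defs
  imports "HOL-Probability.Probability"
begin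

definition total_variation :: "(real \<Rightarrow> real) \<Rightarrow> ennreal" where
  "total_variation f =
     (SUP xs \<in> {(n, x). \<forall>k<n. x k < x (Suc k)}.
        ennreal (\<Sum>k\<in>{1..fst xs}. \<bar>f (snd xs k) - f (snd xs (k - 1))\<bar>))"

definition tv_normalized :: "(real \<Rightarrow> real) \<Rightarrow> bool" where
  "tv_normalized f \<longleftrightarrow> (\<forall>x. \<exists>l r. (f \<longlongrightarrow> l) (at_left x) \<and> (f \<longlongrightarrow> r) (at_right x)
       \<and> min l r \<le> f x \<and> f x \<le> max l r)"

definition unif_dens :: "real \<Rightarrow> real \<Rightarrow> real \<Rightarrow> real" where
  "unif_dens a b x = indicator {a<..<b} x / (b - a)"

end

theory Submission
  imports Defs
begin


definition incs :: "nat \<Rightarrow> (nat \<Rightarrow> real) \<Rightarrow> bool" where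
  "incs n t \<longleftrightarrow> (\<forall>k<n. t k < t (Suc k))"
definition vsum :: "(real\<Rightarrow>real) \<Rightarrow> nat \<Rightarrow> (nat\<Rightarrow>real) \<Rightarrow> real" where
  "vsum f n t = (\<Sum>k\<in>{1..n}. \<bar>f (t k) - f (t (k - 1))\<bar>)"

lemma tv_upper: "incs n t \<Longrightarrow> ennreal (vsum f n t) \<le> total_variation f"
  unfolding total_variation_def by (rule SUP_upper2[where i="(n,t)"]) (auto simp: incs_def vsum_def)

lemma tv_least: "(\<And>n t. incs n t \<Longrightarrow> vsum f n t \<le> B) \<Longrightarrow> total_variation f \<le> ennreal B"
  unfolding total_variation_def by (rule SUP_least) (auto simp: incs_def vsum_def intro!: ennreal_leI)

lemma tele: fixes g :: "nat \<Rightarrow> real" shows "(\<Sum>k\<in>{1..n}. g k - g (k-1)) = g n - g 0"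
  by (induction n) auto

lemma incs_mono: "incs n t \<Longrightarrow> i \<le> j \<Longrightarrow> j \<le> n \<Longrightarrow> t i \<le> t j"
proof (induction j)
  case (Suc j)
  show ?case
  proof (cases "i = Suc j")
    case False
    then have "i \<le> j" using Suc by auto
    then have "t i \<le> t j" using Suc by auto
    also have "t j < t (Suc j)" using Suc(2,4) unfolding incs_def by auto
    finally show ?thesis by simp
  qed simp
qed auto

lemma tv_unif: assumes "a < b" shows "total_variation (unif_dens a b) \<le> ennreal (2 / (b - a))"
proof (rule tv_least)
  fix n t assume t: "incs n t"
  define c where "c = 1 / (b - a)"
  have c: "c > 0" using assms by (simp add: c_def)
  define g where "g x = (if a < x then 1 else 0::real)" for x
  define h where "h x = (if b \<le> x then 1 else 0::real)" for x
  have q: "unif_dens a b x = c * (g x - h x)" for x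
    unfolding unif_dens_def c_def g_def h_def indicator_def using assms by (cases "a < x"; cases "x < b") auto
  have gm: "x \<le> y \<Longrightarrow> g x \<le> g y" for x y
    unfolding g_def using order_less_le_trans[of a x y] by simp
  have hm: "x \<le> y \<Longrightarrow> h x \<le> h y" for x y
    unfolding h_def using order_trans[of b x y] by simp
  have "vsum (unif_dens a b) n t \<le> (\<Sum>k\<in>{1..n}. c * ((g (t k) - g (t (k-1))) + (h (t k) - h (t (k-1)))))"
    unfolding vsum_def
  proof (rule sum_mono)
    fix k assume k: "k \<in> {1..n}"
    have le: "t (k-1) \<le> t k" using incs_mono[OF t, of "k-1" k] k by auto
    have "\<bar>unif_dens a b (t k) - unif_dens a b (t (k - 1))\<bar> = c * \<bar>(g (t k) - g (t (k-1))) - (h (t k) - h (t (k-1)))\<bar>"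
    proof -
      have "unif_dens a b (t k) - unif_dens a b (t (k - 1)) = c * ((g (t k) - g (t (k-1))) - (h (t k) - h (t (k-1))))"
        by (simp add: q algebra_simps)
      then show ?thesis using c by (simp add: abs_mult)
    qed
    also have "\<dots> \<le> c * ((g (t k) - g (t (k-1))) + (h (t k) - h (t (k-1))))"
      using gm[OF le] hm[OF le] c by (intro mult_left_mono) auto
    finally show "\<bar>unif_dens a b (t k) - unif_dens a b (t (k - 1))\<bar> \<le> \<dots>" .
  qed
  also have "\<dots> = c * ((g (t n) - g (t 0)) + (h (t n) - h (t 0)))"
    using tele[of "\<lambda>k. g (t k)" n] tele[of "\<lambda>k. h (t k)" n]
    by (simp add: sum_distrib_left[symmetric] sum.distrib)
  also have "\<dots> \<le> c * 2"
    using c by (intro mult_left_mono) (auto simp: g_def h_def)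
  also have "c * 2 = 2 / (b - a)" by (simp add: c_def)
  finally show "vsum (unif_dens a b) n t \<le> 2 / (b - a)" .
qed



lemma seg_sum_aux:
  fixes v L R :: "nat \<Rightarrow> real"
  assumes "\<forall>k\<le>n. min (L k) (R k) \<le> v k \<and> v k \<le> max (L k) (R k)"
  shows "(\<Sum>k\<in>{1..n}. \<bar>v k - v (k - 1)\<bar>) + \<bar>R n - v n\<bar> \<le> (\<Sum>k\<le>n. \<bar>R k - L k\<bar>) + (\<Sum>k\<in>{1..n}. \<bar>L k - R (k - 1)\<bar>)"
  using assms
proof (induction n)
  case 0
  then show ?case by (auto simp: min_def max_def split: if_splits)
next
  case (Suc n)
  then have IH: "(\<Sum>k\<in>{1..n}. \<bar>v k - v (k - 1)\<bar>) + \<bar>R n - v n\<bar> \<le> (\<Sum>k\<le>n. \<bar>R k - L k\<bar>) + (\<Sum>k\<in>{1..n}. \<bar>L k - R (k - 1)\<bar>)"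
    by auto
  have seg: "\<bar>v (Suc n) - L (Suc n)\<bar> + \<bar>R (Suc n) - v (Suc n)\<bar> = \<bar>R (Suc n) - L (Suc n)\<bar>"
    using Suc.prems[rule_format, of "Suc n"] by (auto simp: min_def max_def split: if_splits)
  have tri: "\<bar>v (Suc n) - v n\<bar> \<le> \<bar>v (Suc n) - L (Suc n)\<bar> + \<bar>L (Suc n) - R n\<bar> + \<bar>R n - v n\<bar>"
    by linarith
  show ?case using IH seg tri by simp
qed

lemma seg_sum:
  fixes v L R :: "nat \<Rightarrow> real"
  assumes "\<forall>k\<le>n. min (L k) (R k) \<le> v k \<and> v k \<le> max (L k) (R k)"
  shows "(\<Sum>k\<in>{1..n}. \<bar>v k - v (k - 1)\<bar>) \<le> (\<Sum>k\<le>n. \<bar>R k - L k\<bar>) + (\<Sum>k\<in>{1..n}. \<bar>L k - R (k - 1)\<bar>)"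
  using seg_sum_aux[OF assms] by linarith

definition ilv :: "(nat \<Rightarrow> real) \<Rightarrow> (nat \<Rightarrow> real) \<Rightarrow> nat \<Rightarrow> real" where
  "ilv Y Z j = (if even j then Y (j div 2) else Z (j div 2))"

lemma ilv_even[simp]: "ilv Y Z (2 * k) = Y k" by (simp add: ilv_def)
lemma ilv_odd[simp]: "ilv Y Z (Suc (2 * k)) = Z k" by (simp add: ilv_def)

lemma interleave_sum:
  "vsum f (Suc (2 * n)) (ilv Y Z) = (\<Sum>k\<le>n. \<bar>f (Z k) - f (Y k)\<bar>) + (\<Sum>k\<in>{1..n}. \<bar>f (Y k) - f (Z (k - 1))\<bar>)"
proof (induction n)
  case 0
  then show ?case by (simp add: vsum_def ilv_def)
next
  case (Suc n)
  have e1: "vsum f (Suc (2 * Suc n)) (ilv Y Z) = vsum f (Suc (2 * n)) (ilv Y Z)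
     + \<bar>f (Y (Suc n)) - f (Z n)\<bar> + \<bar>f (Z (Suc n)) - f (Y (Suc n))\<bar>"
  proof -
    have a: "Suc (2 * Suc n) = Suc (Suc (Suc (2 * n)))" by simp
    have b: "ilv Y Z (Suc (Suc (2 * n))) = Y (Suc n)"
      using ilv_even[of Y Z "Suc n"] by (simp del: ilv_even)
    have c: "ilv Y Z (Suc (Suc (Suc (2 * n)))) = Z (Suc n)"
      using ilv_odd[of Y Z "Suc n"] by (simp del: ilv_odd)
    show ?thesis unfolding a vsum_def using b c by simp
  qed
  show ?case unfolding e1 Suc.IH by simp
qed

lemma ilv_incs:
  assumes "\<forall>k\<le>n. Y k < Z k" "\<forall>k<n. Z k < Y (Suc k)"
  shows "incs (Suc (2 * n)) (ilv Y Z)"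
  unfolding incs_def
proof (intro allI impI)
  fix j assume j: "j < Suc (2 * n)"
  show "ilv Y Z j < ilv Y Z (Suc j)"
  proof (cases "even j")
    case True
    then obtain k where k: "j = 2 * k" by (auto elim: evenE)
    then show ?thesis using assms(1) j by simp
  next
    case False
    then obtain k where k: "j = Suc (2 * k)" by (auto elim: oddE)
    have "Suc j = 2 * Suc k" using k by simp
    then show ?thesis using assms(2) j k by (auto simp: ilv_def)
  qed
qed


lemma left_pt:
  fixes p :: "real \<Rightarrow> real"
  assumes "(p \<longlongrightarrow> l) (at_left x)" "c < x" "e > 0" "countable (-G)"
  shows "\<exists>y\<in>G. c < y \<and> y < x \<and> \<bar>p y - l\<bar> < e"
proof -
  have "eventually (\<lambda>y. dist (p y) l < e) (at_left x)" using tendstoD assms(1,3) by blast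
  then obtain b where b: "b < x" "\<forall>y>b. y < x \<longrightarrow> dist (p y) l < e" by (auto simp: eventually_at_left_field)
  have "uncountable {max b c<..<x}" using b assms by (simp add: uncountable_open_interval)
  then have "\<not> {max b c<..<x} \<subseteq> -G" using countable_subset assms(4) by blast
  then obtain y where "y \<in> G" "y \<in> {max b c<..<x}" by blast
  then show ?thesis using b by (intro bexI[of _ y]) (auto simp: dist_real_def)
qed

lemma right_pt:
  fixes p :: "real \<Rightarrow> real"
  assumes "(p \<longlongrightarrow> r) (at_right x)" "x < c" "e > 0" "countable (-G)"
  shows "\<exists>y\<in>G. x < y \<and> y < c \<and> \<bar>p y - r\<bar> < e"
proof -
  have "eventually (\<lambda>y. dist (p y) r < e) (at_right x)" using tendstoD assms(1,3) by blast
  then obtain b where b: "b > x" "\<forall>y>x. y < b \<longrightarrow> dist (p y) r < e" by (auto simp: eventually_at_right_field)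
  have "uncountable {x<..<min b c}" using b assms by (simp add: uncountable_open_interval)
  then have "\<not> {x<..<min b c} \<subseteq> -G" using countable_subset assms(4) by blast
  then obtain y where "y \<in> G" "y \<in> {x<..<min b c}" by blast
  then show ?thesis using b by (intro bexI[of _ y]) (auto simp: dist_real_def)
qed

lemma approx:
  fixes p :: "real \<Rightarrow> real"
  assumes norm: "tv_normalized p" and G: "countable (-G)" and t: "incs n t" and e: "e > 0"
  shows "\<exists>m u. incs m u \<and> (\<forall>j\<le>m. u j \<in> G) \<and> vsum p n t \<le> vsum p m u + e"
proof -
  have "\<forall>x. \<exists>lr. (p \<longlongrightarrow> fst lr) (at_left x) \<and> (p \<longlongrightarrow> snd lr) (at_right x) \<and>
      min (fst lr) (snd lr) \<le> p x \<and> p x \<le> max (fst lr) (snd lr)"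
  proof
    fix x
    obtain l r where "(p \<longlongrightarrow> l) (at_left x)" "(p \<longlongrightarrow> r) (at_right x)" "min l r \<le> p x" "p x \<le> max l r"
      using norm unfolding tv_normalized_def by blast
    then show "\<exists>lr. (p \<longlongrightarrow> fst lr) (at_left x) \<and> (p \<longlongrightarrow> snd lr) (at_right x) \<and>
      min (fst lr) (snd lr) \<le> p x \<and> p x \<le> max (fst lr) (snd lr)" by (intro exI[of _ "(l, r)"]) simp
  qed
  then obtain LR where LR: "\<forall>x. (p \<longlongrightarrow> fst (LR x)) (at_left x) \<and> (p \<longlongrightarrow> snd (LR x)) (at_right x) \<and>
      min (fst (LR x)) (snd (LR x)) \<le> p x \<and> p x \<le> max (fst (LR x)) (snd (LR x))"
    using choice[of "\<lambda>x lr. (p \<longlongrightarrow> fst lr) (at_left x) \<and> (p \<longlongrightarrow> snd lr) (at_right x) \<and>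
      min (fst lr) (snd lr) \<le> p x \<and> p x \<le> max (fst lr) (snd lr)"] by blast
  define L where "L x = fst (LR x)" for x
  define R where "R x = snd (LR x)" for x
  have LR': "(p \<longlongrightarrow> L x) (at_left x)" "(p \<longlongrightarrow> R x) (at_right x)" "min (L x) (R x) \<le> p x" "p x \<le> max (L x) (R x)" for x
    using LR by (auto simp: L_def R_def)
  define e' where "e' = e / (4 * real n + 2)"
  have e': "e' > 0" using e by (simp add: e'_def)
  have e'e: "(4 * real n + 2) * e' = e" by (simp add: e'_def)
  define lo where "lo k = (if k = 0 then t 0 - 1 else (t (k - 1) + t k) / 2)" for k
  define hi where "hi k = (if k < n then (t k + t (Suc k)) / 2 else t n + 1)" for k
  have tinc: "k < n \<Longrightarrow> t k < t (Suc k)" for k using t by (simp add: incs_def)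
  have lo: "k \<le> n \<Longrightarrow> lo k < t k" for k
  proof (cases k)
    case (Suc j) assume "k \<le> n" then show ?thesis using tinc[of j] Suc by (simp add: lo_def)
  qed (simp add: lo_def)
  have hi: "k \<le> n \<Longrightarrow> t k < hi k" for k using tinc[of k] by (auto simp: hi_def)
  have hilo: "k < n \<Longrightarrow> hi k = lo (Suc k)" for k by (simp add: hi_def lo_def)
  have "\<forall>k. \<exists>yz. k \<le> n \<longrightarrow> (fst yz \<in> G \<and> snd yz \<in> G \<and> lo k < fst yz \<and> fst yz < t k \<and> t k < snd yz \<and> snd yz < hi k
        \<and> \<bar>p (fst yz) - L (t k)\<bar> < e' \<and> \<bar>p (snd yz) - R (t k)\<bar> < e')"
  proof
    fix k
    show "\<exists>yz. k \<le> n \<longrightarrow> (fst yz \<in> G \<and> snd yz \<in> G \<and> lo k < fst yz \<and> fst yz < t k \<and> t k < snd yz \<and> snd yz < hi k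
        \<and> \<bar>p (fst yz) - L (t k)\<bar> < e' \<and> \<bar>p (snd yz) - R (t k)\<bar> < e')"
    proof (cases "k \<le> n")
      case True
      obtain y where y: "y \<in> G" "lo k < y" "y < t k" "\<bar>p y - L (t k)\<bar> < e'"
        using left_pt[OF LR'(1) lo[OF True] e' G] by blast
      obtain z where z: "z \<in> G" "t k < z" "z < hi k" "\<bar>p z - R (t k)\<bar> < e'"
        using right_pt[OF LR'(2) hi[OF True] e' G] by blast
      show ?thesis using y z by (intro exI[of _ "(y, z)"]) simp
    qed simp
  qed
  then obtain YZ where YZ: "\<forall>k. k \<le> n \<longrightarrow> (fst (YZ k) \<in> G \<and> snd (YZ k) \<in> G \<and> lo k < fst (YZ k) \<and> fst (YZ k) < t k \<and> t k < snd (YZ k) \<and> snd (YZ k) < hi k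
        \<and> \<bar>p (fst (YZ k)) - L (t k)\<bar> < e' \<and> \<bar>p (snd (YZ k)) - R (t k)\<bar> < e')"
    by metis
  define Y where "Y k = fst (YZ k)" for k
  define Z where "Z k = snd (YZ k)" for k
  have Y: "k \<le> n \<Longrightarrow> Y k \<in> G \<and> lo k < Y k \<and> Y k < t k \<and> \<bar>p (Y k) - L (t k)\<bar> < e'" for k
    using YZ by (simp add: Y_def)
  have Z: "k \<le> n \<Longrightarrow> Z k \<in> G \<and> t k < Z k \<and> Z k < hi k \<and> \<bar>p (Z k) - R (t k)\<bar> < e'" for k
    using YZ by (simp add: Z_def)
  have inc: "incs (Suc (2 * n)) (ilv Y Z)"
  proof (rule ilv_incs)
    show "\<forall>k\<le>n. Y k < Z k" using Y Z by force
    show "\<forall>k<n. Z k < Y (Suc k)"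
    proof (intro allI impI)
      fix k assume k: "k < n"
      have "Z k < hi k" using Z[of k] k by simp
      also have "\<dots> = lo (Suc k)" using hilo[OF k] .
      also have "\<dots> < Y (Suc k)" using Y[of "Suc k"] k by simp
      finally show "Z k < Y (Suc k)" .
    qed
  qed
  have inG: "\<forall>j\<le>Suc (2 * n). ilv Y Z j \<in> G"
  proof (intro allI impI)
    fix j assume j: "j \<le> Suc (2 * n)"
    then have "j div 2 \<le> n" by linarith
    then show "ilv Y Z j \<in> G" using Y Z by (simp add: ilv_def)
  qed
  have "vsum p n t \<le> (\<Sum>k\<le>n. \<bar>R (t k) - L (t k)\<bar>) + (\<Sum>k\<in>{1..n}. \<bar>L (t k) - R (t (k - 1))\<bar>)"
    unfolding vsum_def by (rule seg_sum[of n "\<lambda>k. L (t k)" "\<lambda>k. R (t k)" "\<lambda>k. p (t k)"]) (use LR' in blast)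
  also have "\<dots> \<le> (\<Sum>k\<le>n. \<bar>p (Z k) - p (Y k)\<bar> + 2 * e') + (\<Sum>k\<in>{1..n}. \<bar>p (Y k) - p (Z (k - 1))\<bar> + 2 * e')"
  proof (rule add_mono)
    show "(\<Sum>k\<le>n. \<bar>R (t k) - L (t k)\<bar>) \<le> (\<Sum>k\<le>n. \<bar>p (Z k) - p (Y k)\<bar> + 2 * e')"
    proof (rule sum_mono)
      fix k assume "k \<in> {..n}"
      then show "\<bar>R (t k) - L (t k)\<bar> \<le> \<bar>p (Z k) - p (Y k)\<bar> + 2 * e'" using Y[of k] Z[of k] by auto
    qed
    show "(\<Sum>k\<in>{1..n}. \<bar>L (t k) - R (t (k - 1))\<bar>) \<le> (\<Sum>k\<in>{1..n}. \<bar>p (Y k) - p (Z (k - 1))\<bar> + 2 * e')"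
    proof (rule sum_mono)
      fix k assume k: "k \<in> {1..n}"
      then have "k - 1 \<le> n" by auto
      note Zk = Z[OF this]
      have "k \<le> n" using k by simp
      note Yk = Y[OF this]
      show "\<bar>L (t k) - R (t (k - 1))\<bar> \<le> \<bar>p (Y k) - p (Z (k - 1))\<bar> + 2 * e'" using Yk Zk by (smt (verit))
    qed
  qed
  also have "\<dots> = vsum p (Suc (2 * n)) (ilv Y Z) + (4 * real n + 2) * e'"
    unfolding interleave_sum by (simp add: sum.distrib algebra_simps)
  finally have "vsum p n t \<le> vsum p (Suc (2 * n)) (ilv Y Z) + e" using e'e by simp
  then show ?thesis using inc inG by blast
qed

lemma good_bound:
  fixes Q :: "'a \<Rightarrow> real \<Rightarrow> real" and p :: "real \<Rightarrow> real"
  assumes Qm: "\<And>x. (\<lambda>z. Q z x) \<in> borel_measurable M" and Qnn: "\<And>z x. Q z x \<ge> 0"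
    and pnn: "\<And>x. p x \<ge> 0"
    and rep: "\<And>x. x \<in> G \<Longrightarrow> ennreal (p x) = (\<integral>\<^sup>+z. ennreal (Q z x) \<partial>M)"
    and u: "incs m u" "\<forall>j\<le>m. u j \<in> G"
  shows "ennreal (vsum p m u) \<le> (\<integral>\<^sup>+z. total_variation (Q z) \<partial>M)"
proof -
  have int: "integrable M (\<lambda>z. Q z (u j))" and eq: "p (u j) = (\<integral>z. Q z (u j) \<partial>M)" if j: "j \<le> m" for j
  proof -
    have r: "ennreal (p (u j)) = (\<integral>\<^sup>+z. ennreal (Q z (u j)) \<partial>M)" using rep u(2) j by blast
    show i: "integrable M (\<lambda>z. Q z (u j))"
      using r[symmetric] by (intro integrableI_nonneg) (auto simp: Qm Qnn)
    have "ennreal (p (u j)) = ennreal (\<integral>z. Q z (u j) \<partial>M)"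
      using r nn_integral_eq_integral[OF i] Qnn by simp
    then show "p (u j) = (\<integral>z. Q z (u j) \<partial>M)" using pnn Qnn by (simp add: integral_nonneg)
  qed
  have intk: "integrable M (\<lambda>z. \<bar>Q z (u k) - Q z (u (k - 1))\<bar>)" if "k \<in> {1..m}" for k
    using int[of k] int[of "k - 1"] that by auto
  have "vsum p m u = (\<Sum>k\<in>{1..m}. \<bar>\<integral>z. Q z (u k) - Q z (u (k - 1)) \<partial>M\<bar>)"
    unfolding vsum_def by (rule sum.cong) (auto simp: eq int)
  also have "\<dots> \<le> (\<Sum>k\<in>{1..m}. \<integral>z. \<bar>Q z (u k) - Q z (u (k - 1))\<bar> \<partial>M)"
    by (rule sum_mono) (rule integral_abs_bound)
  also have "\<dots> = (\<integral>z. vsum (Q z) m u \<partial>M)"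
    unfolding vsum_def using Bochner_Integration.integral_sum[of "{1..m}" M "\<lambda>k z. \<bar>Q z (u k) - Q z (u (k - 1))\<bar>"] intk by simp
  finally have 1: "ennreal (vsum p m u) \<le> ennreal (\<integral>z. vsum (Q z) m u \<partial>M)" by (rule ennreal_leI)
  have "ennreal (\<integral>z. vsum (Q z) m u \<partial>M) = (\<integral>\<^sup>+z. ennreal (vsum (Q z) m u) \<partial>M)"
  proof -
    have "integrable M (\<lambda>z. vsum (Q z) m u)"
      unfolding vsum_def using Bochner_Integration.integrable_sum[of "{1..m}" M "\<lambda>k z. \<bar>Q z (u k) - Q z (u (k - 1))\<bar>"] intk by blast
    moreover have "AE z in M. 0 \<le> vsum (Q z) m u" unfolding vsum_def by (auto intro: sum_nonneg)
    ultimately show ?thesis by (rule nn_integral_eq_integral[symmetric])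
  qed
  also have "\<dots> \<le> (\<integral>\<^sup>+z. total_variation (Q z) \<partial>M)"
    by (rule nn_integral_mono) (rule tv_upper[OF u(1)])
  finally show ?thesis using 1 by simp
qed

lemma tv_lower:
  fixes Q :: "'a \<Rightarrow> real \<Rightarrow> real" and p :: "real \<Rightarrow> real"
  assumes Qm: "\<And>x. (\<lambda>z. Q z x) \<in> borel_measurable M" and Qnn: "\<And>z x. Q z x \<ge> 0"
    and pnn: "\<And>x. p x \<ge> 0"
    and rep: "\<And>x. x \<in> G \<Longrightarrow> ennreal (p x) = (\<integral>\<^sup>+z. ennreal (Q z x) \<partial>M)"
    and G: "countable (-G)" and norm: "tv_normalized p"
  shows "total_variation p \<le> (\<integral>\<^sup>+z. total_variation (Q z) \<partial>M)"
proof -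
  have H: "ennreal (vsum p n t) \<le> (\<integral>\<^sup>+z. total_variation (Q z) \<partial>M)" if t: "incs n t" for n t
  proof (rule ennreal_le_epsilon)
    fix e :: real assume e: "0 < e"
    obtain m u where mu: "incs m u" "\<forall>j\<le>m. u j \<in> G" "vsum p n t \<le> vsum p m u + e"
      using approx[OF norm G t e] by blast
    have vnn: "vsum p m u \<ge> 0" unfolding vsum_def by (auto intro: sum_nonneg)
    have "ennreal (vsum p n t) \<le> ennreal (vsum p m u + e)" using mu(3) by (rule ennreal_leI)
    also have "\<dots> = ennreal (vsum p m u) + ennreal e" using vnn e by (simp add: ennreal_plus)
    also have "\<dots> \<le> (\<integral>\<^sup>+z. total_variation (Q z) \<partial>M) + ennreal e"
      using good_bound[OF Qm Qnn pnn rep mu(1,2)] by (rule add_right_mono)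
    finally show "ennreal (vsum p n t) \<le> (\<integral>\<^sup>+z. total_variation (Q z) \<partial>M) + ennreal e" .
  qed
  show ?thesis unfolding total_variation_def[of p]
    by (rule SUP_least) (use H in \<open>auto simp: incs_def vsum_def\<close>)
qed



definition pval :: "(real\<Rightarrow>real) \<Rightarrow> nat \<Rightarrow> (nat\<Rightarrow>real) \<Rightarrow> real" where
  "pval f n t = f (t 0) + (\<Sum>k\<in>{1..n}. max 0 (f (t k) - f (t (k - 1))))"

definition pre :: "real \<Rightarrow> (nat \<Rightarrow> real) \<Rightarrow> nat \<Rightarrow> real" where
  "pre z t = (\<lambda>k. if k = 0 then z else t (k - 1))"

lemma incs_app: "incs n t \<Longrightarrow> t n < z \<Longrightarrow> incs (Suc n) (t(Suc n := z))"
  unfolding incs_def by (auto simp: less_Suc_eq)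

lemma vsum_app: "vsum f (Suc n) (t(Suc n := z)) = vsum f n t + \<bar>f z - f (t n)\<bar>"
proof -
  have "(\<Sum>k\<in>{1..n}. \<bar>f ((t(Suc n := z)) k) - f ((t(Suc n := z)) (k - 1))\<bar>) = vsum f n t"
    unfolding vsum_def by (rule sum.cong) auto
  then show ?thesis unfolding vsum_def by simp
qed

lemma pval_app: "pval f (Suc n) (t(Suc n := z)) = pval f n t + max 0 (f z - f (t n))"
proof -
  have "(\<Sum>k\<in>{1..n}. max 0 (f ((t(Suc n := z)) k) - f ((t(Suc n := z)) (k - 1)))) = (\<Sum>k\<in>{1..n}. max 0 (f (t k) - f (t (k - 1))))"
    by (rule sum.cong) auto
  then show ?thesis unfolding pval_def by simp
qed

lemma incs_pre: "incs n t \<Longrightarrow> z < t 0 \<Longrightarrow> incs (Suc n) (pre z t)"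
  unfolding incs_def pre_def by (auto simp: less_Suc_eq_0_disj)

lemma vsum_pre: "vsum f (Suc n) (pre z t) = \<bar>f (t 0) - f z\<bar> + vsum f n t"
  by (induction n) (auto simp: vsum_def pre_def)

lemma pval_id: "2 * pval f n t = f (t 0) + f (t n) + vsum f n t"
proof -
  have "2 * (\<Sum>k\<in>{1..n}. max 0 (f (t k) - f (t (k - 1)))) = (\<Sum>k\<in>{1..n}. \<bar>f (t k) - f (t (k - 1))\<bar> + (f (t k) - f (t (k - 1))))"
    by (simp add: sum_distrib_left) (rule sum.cong; simp add: max_def abs_if)
  also have "\<dots> = vsum f n t + (f (t n) - f (t 0))"
    using tele[of "\<lambda>k. f (t k)" n] by (simp add: sum.distrib vsum_def)
  finally show ?thesis unfolding pval_def by simp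
qed

lemma ext_to:
  assumes "incs n t" "t n \<le> x"
  shows "\<exists>m u. incs m u \<and> u m = x \<and> u 0 = t 0 \<and> pval f m u = pval f n t + max 0 (f x - f (t n))
     \<and> vsum f m u = vsum f n t + \<bar>f x - f (t n)\<bar>"
proof (cases "t n = x")
  case True then show ?thesis using assms by (intro exI[of _ n] exI[of _ t]) auto
next
  case False
  then have "t n < x" using assms by simp
  then show ?thesis using assms
    by (intro exI[of _ "Suc n"] exI[of _ "t(Suc n := x)"]) (auto simp: incs_app vsum_app pval_app)
qed

context
  fixes p :: "real \<Rightarrow> real"
  assumes meas: "p \<in> borel_measurable borel"
    and nonneg: "\<And>x. p x \<ge> 0"
    and total: "(\<integral>\<^sup>+ x. ennreal (p x) \<partial>lborel) = 1"
    and norm: "tv_normalized p"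
    and bv: "total_variation p < \<infinity>"
begin

definition V where "V = enn2real (total_variation p)"

lemma V_nonneg: "V \<ge> 0" by (simp add: V_def)

lemma TV_eq: "total_variation p = ennreal V"
  using bv unfolding V_def by (simp add: ennreal_enn2real less_top)

lemma vsum_le: "incs n t \<Longrightarrow> vsum p n t \<le> V"
  using tv_upper[of n t p] TV_eq V_nonneg by (simp add: ennreal_le_iff)

lemma p_bound: "p y \<le> p 0 + V"
proof -
  consider "y < 0" | "y = 0" | "y > 0" by linarith
  then show ?thesis
  proof cases
    case 1
    define t where "t = (\<lambda>k::nat. if k = 0 then y else 0)"
    have "incs 1 t" using 1 by (simp add: incs_def t_def)
    from vsum_le[OF this] have "\<bar>p 0 - p y\<bar> \<le> V" by (simp add: vsum_def t_def)
    then show ?thesis by linarith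
  next
    case 2 then show ?thesis using V_nonneg by simp
  next
    case 3
    define t where "t = (\<lambda>k::nat. if k = 0 then 0 else y)"
    have "incs 1 t" using 3 by (simp add: incs_def t_def)
    from vsum_le[OF this] have "\<bar>p y - p 0\<bar> \<le> V" by (simp add: vsum_def t_def)
    then show ?thesis by linarith
  qed
qed

lemma not_big_on: assumes e: "e > 0" and big: "\<And>x. x \<in> {l..l + 2/e} \<Longrightarrow> e \<le> p x" shows False
proof -
  have "(\<integral>\<^sup>+ x. ennreal e * indicator {l..l + 2/e} x \<partial>lborel) \<le> (\<integral>\<^sup>+ x. ennreal (p x) \<partial>lborel)"
    using big by (intro nn_integral_mono) (auto simp: indicator_def intro: ennreal_leI)
  also have "\<dots> = 1" by (rule total)
  finally have "ennreal e * ennreal (2 / e) \<le> 1" using e by (simp add: nn_integral_cmult_indicator)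
  then have "ennreal 2 \<le> 1" using e by (simp add: ennreal_mult[symmetric])
  then show False by simp
qed

lemma small_right: "e > 0 \<Longrightarrow> \<exists>x\<ge>M. p x < e"
  using not_big_on[of e M] by (metis atLeastAtMost_iff not_less)

lemma small_left: "e > 0 \<Longrightarrow> \<exists>x\<le>M. p x < e"
proof (rule ccontr)
  assume e: "e > 0" and "\<not> (\<exists>x\<le>M. p x < e)"
  then have "\<And>x. x \<in> {M - 2/e..M - 2/e + 2/e} \<Longrightarrow> e \<le> p x" by force
  then show False using not_big_on[OF e] by blast
qed


definition Pset where "Pset x = {pval p n t | n t. incs n t \<and> t n \<le> x}"
definition P where "P x = Sup (Pset x)"

lemma pval_bound: assumes t: "incs n t" shows "pval p n t \<le> 2 * p 0 + 3 * V"
proof -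
  have a: "pval p n t \<ge> 0" unfolding pval_def using nonneg by (intro add_nonneg_nonneg sum_nonneg) auto
  have b: "2 * pval p n t = p (t 0) + p (t n) + vsum p n t" by (rule pval_id)
  have c: "p (t 0) \<le> p 0 + V" by (rule p_bound)
  have d: "p (t n) \<le> p 0 + V" by (rule p_bound)
  have e: "vsum p n t \<le> V" by (rule vsum_le[OF t])
  from a b c d e show ?thesis by linarith
qed

lemma Pset_ne: "Pset x \<noteq> {}"
  unfolding Pset_def by (auto intro!: exI[of _ 0] exI[of _ "\<lambda>_. x"] simp: incs_def)

lemma Pset_bdd: "bdd_above (Pset x)"
  unfolding Pset_def bdd_above_def using pval_bound by blast

lemma P_ge: "incs n t \<Longrightarrow> t n \<le> x \<Longrightarrow> pval p n t \<le> P x"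
  unfolding P_def by (rule cSup_upper[OF _ Pset_bdd]) (auto simp: Pset_def)

lemma P_le: "(\<And>n t. incs n t \<Longrightarrow> t n \<le> x \<Longrightarrow> pval p n t \<le> c) \<Longrightarrow> P x \<le> c"
  unfolding P_def by (rule cSup_least[OF Pset_ne]) (auto simp: Pset_def)

lemma p_le_P: "p x \<le> P x"
  using P_ge[of 0 "\<lambda>_. x" x] by (simp add: incs_def pval_def)

lemma P_mono: "x \<le> y \<Longrightarrow> P x \<le> P y"
  by (rule P_le) (auto intro: P_ge)

lemma P_bound: "P x \<le> 2 * p 0 + 3 * V"
  by (rule P_le) (rule pval_bound)

lemma N_mono: assumes "x \<le> y" shows "P x - p x \<le> P y - p y"
proof -
  have "P x \<le> P y - p y + p x"
  proof (rule P_le)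
    fix n t assume t: "incs n t" "t n \<le> x"
    obtain m u where u: "incs m u" "u m = x" "pval p m u = pval p n t + max 0 (p x - p (t n))"
      using ext_to[OF t, of p] by blast
    obtain m' u' where u': "incs m' u'" "u' m' = y" "pval p m' u' = pval p m u + max 0 (p y - p (u m))"
      using ext_to[OF u(1), of y p] u(2) assms by auto
    have "pval p m' u' \<le> P y" using P_ge[OF u'(1)] u'(2) by simp
    then show "pval p n t \<le> P y - p y + p x" using u(2,3) u'(3) by simp
  qed
  then show ?thesis by simp
qed

lemma twoP: assumes e: "e > 0" shows "2 * P x \<le> V + p x + e"
proof -
  have "P x \<le> (V + p x + e) / 2"
  proof (rule P_le)
    fix n t assume t: "incs n t" "t n \<le> x"
    obtain m u where u: "incs m u" "u m = x" "u 0 = t 0" "vsum p m u = vsum p n t + \<bar>p x - p (t n)\<bar>"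
      using ext_to[OF t, of p] by blast
    obtain z where z: "z \<le> t 0 - 1" "p z < e" using small_left[OF e] by blast
    have "incs (Suc m) (pre z u)" using incs_pre[OF u(1)] z u(3) by simp
    from vsum_le[OF this] have "\<bar>p (t 0) - p z\<bar> + vsum p n t + \<bar>p x - p (t n)\<bar> \<le> V"
      by (simp add: vsum_pre u(3,4))
    then have "p (t 0) + p (t n) + vsum p n t \<le> V + p x + e" using z(2) by linarith
    then show "pval p n t \<le> (V + p x + e) / 2" using pval_id[of p n t] by simp
  qed
  then show ?thesis by simp
qed

definition T where "T = Sup (range P)"
definition P0 where "P0 = Inf (range P)"

lemma P_bdd: "bdd_above (range P)"
  using P_bound by (auto simp: bdd_above_def)

lemma P_nonneg: "P x \<ge> 0" using p_le_P[of x] nonneg[of x] by linarith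

lemma P_bdd_below: "bdd_below (range P)"
  using P_nonneg by (auto simp: bdd_below_def)

lemma P_le_T: "P x \<le> T" unfolding T_def using P_bdd by (simp add: cSup_upper)
lemma P0_le_P: "P0 \<le> P x" unfolding P0_def using P_bdd_below by (simp add: cInf_lower)
lemma P0_nonneg: "P0 \<ge> 0" unfolding P0_def using P_nonneg by (simp add: le_cInf_iff P_bdd_below)

lemma T_le: "2 * T \<le> V"
proof -
  have "2 * P x \<le> V" for x
  proof (rule field_le_epsilon)
    fix e :: real assume e: "e > 0"
    obtain y where y: "y \<ge> x" "p y < e / 2" using small_right[of "e/2" x] e by auto
    have "2 * P x \<le> 2 * P y" using P_mono[OF y(1)] by simp
    also have "\<dots> \<le> V + p y + e / 2" using twoP[of "e/2" y] e by simp
    finally show "2 * P x \<le> V + e" using y(2) by simp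
  qed
  then have "P x \<le> V / 2" for x by (simp add: field_simps)
  then have "T \<le> V / 2" unfolding T_def by (intro cSup_least) auto
  then show ?thesis by simp
qed

definition N where "N x = P x - p x"

lemma N_mono': "mono N" unfolding mono_def N_def using N_mono by blast
lemma P_mono': "mono P" unfolding mono_def using P_mono by blast
lemma N_le_P: "N x \<le> P x" using nonneg[of x] by (simp add: N_def)

lemma P0_le_N: "P0 \<le> N x"
proof (rule field_le_epsilon)
  fix e :: real assume e: "e > 0"
  obtain y where y: "y \<le> x" "p y < e" using small_left[OF e] by blast
  have "P0 \<le> P y" by (rule P0_le_P)
  also have "\<dots> \<le> N y + e" using y by (simp add: N_def)
  also have "N y \<le> N x" using N_mono'[unfolded mono_def] y(1) by blast
  finally show "P0 \<le> N x + e" by simp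
qed

lemma exP: assumes "s < T" shows "\<exists>x. s < P x"
proof (rule ccontr)
  assume "\<not> ?thesis" then have "\<forall>x. P x \<le> s" by (simp add: not_less)
  then have "T \<le> s" unfolding T_def by (intro cSup_least) auto
  with assms show False by simp
qed

lemma exN: assumes "s < T" shows "\<exists>x. s < N x"
proof -
  obtain x where x: "(s + T)/2 < P x" using exP[of "(s+T)/2"] assms by auto
  obtain y where y: "y \<ge> x" "p y < (T - s)/2" using small_right[of "(T - s)/2" x] assms by auto
  have "P x \<le> P y" using P_mono[OF y(1)] .
  then have "s < N y" using x y(2) by (simp add: N_def)
  then show ?thesis by blast
qed

lemma exP_below: assumes "P0 < s" shows "\<exists>x. P x < s"
proof (rule ccontr)
  assume "\<not> ?thesis" then have "\<forall>x. s \<le> P x" by (simp add: not_less)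
  then have "s \<le> P0" unfolding P0_def by (intro cInf_greatest) auto
  with assms show False by simp
qed


definition I where "I = {P0<..<T}"
definition qa where "qa s = Inf {x. s \<le> P x}"
definition qb where "qb s = Inf {x. s \<le> N x}"
definition a where "a s = (if s \<in> I then qa s else 0)"
definition b where "b s = (if s \<in> I then qb s else 0)"

lemma setP_ne: assumes "s \<in> I" shows "{x. s \<le> P x} \<noteq> {}"
proof -
  have "s < T" using assms by (simp add: I_def)
  then obtain x where x: "s < P x" using exP by blast
  then show ?thesis using less_imp_le[OF x] by blast
qed
lemma setN_ne: assumes "s \<in> I" shows "{x. s \<le> N x} \<noteq> {}"
proof -
  obtain x where x: "s < N x" using exN[of s] assms by (auto simp: I_def)
  then show ?thesis using less_imp_le[OF x] by blast
qed

lemma setP_bdd: assumes "s \<in> I" shows "bdd_below {x. s \<le> P x}"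
proof -
  obtain x0 where x0: "P x0 < s" using exP_below[of s] assms by (auto simp: I_def)
  have "x0 \<le> y" if "s \<le> P y" for y
  proof (rule ccontr)
    assume "\<not> x0 \<le> y" then have "P y \<le> P x0" using P_mono by simp
    then show False using x0 that by simp
  qed
  then show ?thesis by (auto simp: bdd_below_def)
qed

lemma setN_bdd: assumes "s \<in> I" shows "bdd_below {x. s \<le> N x}"
proof -
  obtain x0 where x0: "P x0 < s" using exP_below[of s] assms by (auto simp: I_def)
  have "x0 \<le> y" if "s \<le> N y" for y
  proof (rule ccontr)
    assume "\<not> x0 \<le> y" then have "N y \<le> N x0" using N_mono'[unfolded mono_def] by simp
    then show False using x0 that N_le_P[of x0] by simp
  qed
  then show ?thesis by (auto simp: bdd_below_def)
qed

lemma qa_mono: "mono_on I qa"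
proof (rule mono_onI)
  fix r s assume rs: "r \<in> I" "s \<in> I" "r \<le> s"
  show "qa r \<le> qa s" unfolding qa_def
    by (rule cInf_superset_mono[OF setP_ne[OF rs(2)] setP_bdd[OF rs(1)]]) (use rs(3) in auto)
qed

lemma qb_mono: "mono_on I qb"
proof (rule mono_onI)
  fix r s assume rs: "r \<in> I" "s \<in> I" "r \<le> s"
  show "qb r \<le> qb s" unfolding qb_def
    by (rule cInf_superset_mono[OF setN_ne[OF rs(2)] setN_bdd[OF rs(1)]]) (use rs(3) in auto)
qed

lemma I_borel: "I \<in> sets borel" by (simp add: I_def)

lemma a_meas[measurable]: "a \<in> borel_measurable borel"
proof -
  have "qa \<in> borel_measurable (restrict_space borel I)" by (rule borel_measurable_mono_on_fnc[OF qa_mono])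
  then show ?thesis unfolding a_def[abs_def] using I_borel by (subst (asm) measurable_restrict_space_iff) auto
qed

lemma b_meas[measurable]: "b \<in> borel_measurable borel"
proof -
  have "qb \<in> borel_measurable (restrict_space borel I)" by (rule borel_measurable_mono_on_fnc[OF qb_mono])
  then show ?thesis unfolding b_def[abs_def] using I_borel by (subst (asm) measurable_restrict_space_iff) auto
qed

lemma cont_below: fixes f :: "real \<Rightarrow> real" assumes "isCont f x" "(c::real) < f x" shows "\<exists>d>0. c < f (x - d)"
proof -
  have "eventually (\<lambda>y. c < f y) (at x)" using assms isCont_def order_tendstoD(1) by blast
  then obtain d where d: "d > 0" "\<And>y. y \<noteq> x \<Longrightarrow> dist y x < d \<Longrightarrow> c < f y"
    by (auto simp: eventually_at)
  have "c < f (x - d/2)" using d by (intro d(2)) (auto simp: dist_real_def)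
  then show ?thesis using d(1) by (intro exI[of _ "d/2"]) auto
qed

lemma cont_above: fixes f :: "real \<Rightarrow> real" assumes "isCont f x" "f x < (c::real)" shows "\<exists>d>0. f (x + d) < c"
proof -
  have "eventually (\<lambda>y. f y < c) (at x)" using assms isCont_def order_tendstoD(2) by blast
  then obtain d where d: "d > 0" "\<And>y. y \<noteq> x \<Longrightarrow> dist y x < d \<Longrightarrow> f y < c"
    by (auto simp: eventually_at)
  have "f (x + d/2) < c" using d by (intro d(2)) (auto simp: dist_real_def)
  then show ?thesis using d(1) by (intro exI[of _ "d/2"]) auto
qed

lemma a_less: assumes s: "s \<in> I" and "a s < x" shows "s \<le> P x"
proof -
  have "Inf {x. s \<le> P x} < x" using assms by (simp add: a_def qa_def)
  then obtain y where "s \<le> P y" "y < x" using cInf_less_iff[OF setP_ne[OF s] setP_bdd[OF s]] by auto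
  then show ?thesis using P_mono[of y x] by simp
qed

lemma less_a: assumes s: "s \<in> I" and c: "isCont P x" and "s < P x" shows "a s < x"
proof -
  obtain d where d: "d > 0" "s < P (x - d)" using cont_below[OF c assms(3)] by blast
  have "Inf {x. s \<le> P x} \<le> x - d" by (rule cInf_lower) (use d setP_bdd[OF s] in auto)
  then show ?thesis using s d by (simp add: a_def qa_def)
qed

lemma b_greater: assumes s: "s \<in> I" and "x < b s" shows "N x < s"
proof (rule ccontr)
  assume "\<not> N x < s"
  then have "Inf {x. s \<le> N x} \<le> x" by (intro cInf_lower) (use setN_bdd[OF s] in auto)
  then show False using assms by (simp add: b_def qb_def)
qed

lemma greater_b: assumes s: "s \<in> I" and c: "isCont N x" and "N x < s" shows "x < b s"
proof -
  obtain d where d: "d > 0" "N (x + d) < s" using cont_above[OF c assms(3)] by blast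
  have "x + d \<le> y" if "s \<le> N y" for y
  proof (rule ccontr)
    assume "\<not> x + d \<le> y" then have "N y \<le> N (x + d)" using N_mono'[unfolded mono_def] by simp
    then show False using d that by simp
  qed
  then have "x + d \<le> Inf {x. s \<le> N x}" by (intro cInf_greatest setN_ne[OF s]) auto
  then show ?thesis using s d by (simp add: b_def qb_def)
qed

definition G where "G = {x. isCont P x \<and> isCont N x}"

lemma G_co: "countable (- G)"
proof -
  have "- G = {x. \<not> isCont P x} \<union> {x. \<not> isCont N x}" by (auto simp: G_def)
  then show ?thesis using mono_ctble_discont[OF P_mono'] mono_ctble_discont[OF N_mono'] by simp
qed

lemma p_eq_N: "p x = P x - N x" by (simp add: N_def)

lemma meas_G: assumes x: "x \<in> G"
  shows "emeasure lborel {s\<in>I. a s < x \<and> x < b s} = ennreal (p x)"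
proof -
  have cP: "isCont P x" and cN: "isCont N x" using x by (auto simp: G_def)
  have A: "{s\<in>I. a s < x \<and> x < b s} \<in> sets borel" using I_borel by measurable
  have sub1: "{N x<..<P x} \<subseteq> {s\<in>I. a s < x \<and> x < b s}"
  proof
    fix s assume s: "s \<in> {N x<..<P x}"
    have sI: "s \<in> I" using s P0_le_N[of x] P_le_T[of x] by (auto simp: I_def)
    show "s \<in> {s\<in>I. a s < x \<and> x < b s}" using sI s less_a[OF sI cP] greater_b[OF sI cN] by auto
  qed
  have sub2: "{s\<in>I. a s < x \<and> x < b s} \<subseteq> {N x<..P x}"
    using a_less b_greater by auto
  have "ennreal (p x) = emeasure lborel {N x<..<P x}" using N_le_P[of x] by (simp add: p_eq_N)
  also have "\<dots> \<le> emeasure lborel {s\<in>I. a s < x \<and> x < b s}"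
    by (rule emeasure_mono[OF sub1]) (use A in simp)
  finally have 1: "ennreal (p x) \<le> emeasure lborel {s\<in>I. a s < x \<and> x < b s}" .
  have "emeasure lborel {s\<in>I. a s < x \<and> x < b s} \<le> emeasure lborel {N x<..P x}"
    by (rule emeasure_mono[OF sub2]) simp
  also have "\<dots> = ennreal (p x)" using N_le_P[of x] by (simp add: p_eq_N)
  finally show ?thesis using 1 by simp
qed


definition w where "w s = indicator I s * ennreal (b s - a s)"
definition mixm where "mixm = distr (density lborel w) borel (\<lambda>s. (a s, b s))"

lemma w_meas[measurable]: "w \<in> borel_measurable borel"
  unfolding w_def using I_borel by measurable

lemma T_meas: "(\<lambda>s. (a s, b s)) \<in> measurable (density lborel w) borel"
proof -
  have "measurable (density lborel w) borel = measurable lborel (borel :: (real \<times> real) measure)"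
    by (rule measurable_cong_sets) auto
  then show ?thesis by simp
qed

lemma sets_pi: "sets mixm = sets borel" by (simp add: mixm_def)

lemma nnI_pi: assumes f: "f \<in> borel_measurable borel"
  shows "(\<integral>\<^sup>+z. f z \<partial>mixm) = (\<integral>\<^sup>+s. w s * f (a s, b s) \<partial>lborel)"
proof -
  have "(\<integral>\<^sup>+z. f z \<partial>mixm) = (\<integral>\<^sup>+s. f (a s, b s) \<partial>density lborel w)"
    unfolding mixm_def by (rule nn_integral_distr[OF T_meas]) (use f in simp)
  also have "\<dots> = (\<integral>\<^sup>+s. w s * f (a s, b s) \<partial>lborel)"
    by (rule nn_integral_density) (use f in simp_all)
  finally show ?thesis .
qed

lemma w_int: "(\<integral>\<^sup>+s. w s \<partial>lborel) = 1"
proof -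
  define F where "F = (\<lambda>z::real \<times> real. indicator {(s, x). s \<in> I \<and> a s < x \<and> x < b s} z :: ennreal)"
  have Fm: "F \<in> borel_measurable (lborel \<Otimes>\<^sub>M lborel)"
    unfolding F_def using I_borel by measurable
  have 1: "w s = (\<integral>\<^sup>+x. F (s, x) \<partial>lborel)" for s
  proof -
    have "(\<integral>\<^sup>+x. F (s, x) \<partial>lborel) = (\<integral>\<^sup>+x. indicator I s * indicator {a s<..<b s} x \<partial>lborel)"
      by (rule nn_integral_cong) (auto simp: F_def indicator_def)
    also have "\<dots> = indicator I s * emeasure lborel {a s<..<b s}"
      by (rule nn_integral_cmult_indicator) simp
    also have "\<dots> = w s"
      by (cases "a s < b s") (auto simp: w_def ennreal_neg)
    finally show ?thesis by simp
  qed
  have 2: "(\<integral>\<^sup>+s. F (s, x) \<partial>lborel) = emeasure lborel {s\<in>I. a s < x \<and> x < b s}" for x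
  proof -
    have "(\<integral>\<^sup>+s. F (s, x) \<partial>lborel) = (\<integral>\<^sup>+s. indicator {s\<in>I. a s < x \<and> x < b s} s \<partial>lborel)"
      by (rule nn_integral_cong) (auto simp: F_def indicator_def)
    also have "\<dots> = emeasure lborel {s\<in>I. a s < x \<and> x < b s}"
      by (rule nn_integral_indicator) (use I_borel in measurable)
    finally show ?thesis .
  qed
  have AEG: "AE x in lborel. x \<in> G"
    by (rule AE_I'[OF countable_imp_null_set_lborel[OF G_co]]) auto
  have "(\<integral>\<^sup>+s. w s \<partial>lborel) = (\<integral>\<^sup>+s. \<integral>\<^sup>+x. F (s, x) \<partial>lborel \<partial>lborel)" by (simp add: 1)
  also have "\<dots> = (\<integral>\<^sup>+x. \<integral>\<^sup>+s. F (s, x) \<partial>lborel \<partial>lborel)"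
    by (rule lborel_pair.Fubini') (use Fm in simp)
  also have "\<dots> = (\<integral>\<^sup>+x. ennreal (p x) \<partial>lborel)"
    by (rule nn_integral_cong_AE) (use AEG in \<open>auto simp: 2 meas_G\<close>)
  also have "\<dots> = 1" by (rule total)
  finally show ?thesis .
qed

lemma prob_pi: "prob_space mixm"
proof (rule prob_spaceI)
  have "emeasure mixm (space mixm) = emeasure (density lborel w) ((\<lambda>s. (a s, b s)) -` UNIV \<inter> space (density lborel w))"
    unfolding mixm_def by (subst emeasure_distr[OF T_meas]) auto
  also have "\<dots> = emeasure (density lborel w) UNIV" by simp
  also have "\<dots> = (\<integral>\<^sup>+s. w s * indicator UNIV s \<partial>lborel)" by (rule emeasure_density) simp_all
  also have "\<dots> = 1" using w_int by simp
  finally show "emeasure mixm (space mixm) = 1" .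
qed

lemma AE_pi: "AE z in mixm. fst z < snd z"
proof -
  have "AE s in lborel. 0 < w s \<longrightarrow> a s < b s"
    by (rule AE_I2) (auto simp: w_def indicator_def)
  then have "AE s in density lborel w. fst (a s, b s) < snd (a s, b s)"
    by (subst AE_density) simp_all
  moreover have "{z \<in> space borel. fst z < snd (z :: real \<times> real)} \<in> sets borel"
  proof -
    have "{z \<in> space (borel \<Otimes>\<^sub>M borel). fst z < snd (z :: real \<times> real)} \<in> sets (borel \<Otimes>\<^sub>M borel)" by measurable
    then show ?thesis unfolding borel_prod .
  qed
  ultimately show ?thesis unfolding mixm_def by (subst AE_distr_iff[OF T_meas]) simp_all
qed

lemma unif_meas: "(\<lambda>z. unif_dens (fst z) (snd z) x) \<in> borel_measurable borel"
proof -
  have "(\<lambda>z. unif_dens (fst z) (snd z) x) \<in> borel_measurable (borel \<Otimes>\<^sub>M borel)"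
    unfolding unif_dens_def indicator_def greaterThanLessThan_iff by measurable
  then show ?thesis by (simp add: borel_prod)
qed

lemma inv_meas: "(\<lambda>z. ennreal (1 / (snd z - fst z))) \<in> borel_measurable (borel :: (real \<times> real) measure)"
proof -
  have "(\<lambda>z::real\<times>real. ennreal (1 / (snd z - fst z))) \<in> borel_measurable (borel \<Otimes>\<^sub>M borel)"
    by measurable
  then show ?thesis by (simp add: borel_prod)
qed

lemma unif_nonneg: "unif_dens a' b' x \<ge> 0"
  by (cases "a' < b'") (auto simp: unif_dens_def indicator_def)

lemma mix: assumes x: "x \<in> G"
  shows "ennreal (p x) = (\<integral>\<^sup>+z. ennreal (unif_dens (fst z) (snd z) x) \<partial>mixm)"
proof -
  have "(\<integral>\<^sup>+z. ennreal (unif_dens (fst z) (snd z) x) \<partial>mixm)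
      = (\<integral>\<^sup>+s. w s * ennreal (unif_dens (a s) (b s) x) \<partial>lborel)"
    using nnI_pi[of "\<lambda>z. ennreal (unif_dens (fst z) (snd z) x)"] unif_meas by simp
  also have "\<dots> = (\<integral>\<^sup>+s. indicator {s\<in>I. a s < x \<and> x < b s} s \<partial>lborel)"
  proof (rule nn_integral_cong)
    fix s
    show "w s * ennreal (unif_dens (a s) (b s) x) = indicator {s\<in>I. a s < x \<and> x < b s} s"
    proof (cases "s \<in> I \<and> a s < x \<and> x < b s")
      case True
      then have ab: "b s - a s > 0" by simp
      have "w s * ennreal (unif_dens (a s) (b s) x) = ennreal (b s - a s) * ennreal (1 / (b s - a s))"
        using True by (simp add: w_def unif_dens_def)
      also have "\<dots> = ennreal ((b s - a s) * (1 / (b s - a s)))" by (rule ennreal_mult[symmetric]) (use ab in auto)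
      also have "\<dots> = 1" using ab by simp
      finally show ?thesis using True by simp
    next
      case False
      then show ?thesis by (auto simp: w_def unif_dens_def indicator_def)
    qed
  qed
  also have "\<dots> = emeasure lborel {s\<in>I. a s < x \<and> x < b s}"
    by (rule nn_integral_indicator) (use I_borel in measurable)
  also have "\<dots> = ennreal (p x)" by (rule meas_G[OF x])
  finally show ?thesis by simp
qed

lemma P0_le_T: "P0 \<le> T" using P0_le_P[of 0] P_le_T[of 0] by simp

lemma inv_int: "(\<integral>\<^sup>+z. ennreal (1 / (snd z - fst z)) \<partial>mixm) \<le> ennreal (T - P0)"
proof -
  have "(\<integral>\<^sup>+z. ennreal (1 / (snd z - fst z)) \<partial>mixm) = (\<integral>\<^sup>+s. w s * ennreal (1 / (b s - a s)) \<partial>lborel)"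
    using nnI_pi[of "\<lambda>z. ennreal (1 / (snd z - fst z))"] inv_meas by simp
  also have "\<dots> \<le> (\<integral>\<^sup>+s. indicator I s \<partial>lborel)"
  proof (rule nn_integral_mono)
    fix s
    show "w s * ennreal (1 / (b s - a s)) \<le> indicator I s"
    proof (cases "s \<in> I \<and> a s < b s")
      case True
      then have ab: "b s - a s > 0" by simp
      have "w s = ennreal (b s - a s)" using True by (simp add: w_def)
      then have "w s * ennreal (1 / (b s - a s)) = ennreal ((b s - a s) * (1 / (b s - a s)))"
        by (simp only:) (rule ennreal_mult[symmetric], use ab in auto)
      then show ?thesis using True ab by simp
    next
      case False
      then show ?thesis by (auto simp: w_def indicator_def ennreal_neg)
    qed
  qed
  also have "\<dots> = emeasure lborel I" using I_borel by simp
  also have "\<dots> = ennreal (T - P0)" using P0_le_T by (simp add: I_def)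
  finally show ?thesis .
qed

lemma tvq_int: "(\<integral>\<^sup>+z. total_variation (unif_dens (fst z) (snd z)) \<partial>mixm) \<le> 2 * (\<integral>\<^sup>+z. ennreal (1 / (snd z - fst z)) \<partial>mixm)"
proof -
  have "(\<integral>\<^sup>+z. total_variation (unif_dens (fst z) (snd z)) \<partial>mixm) \<le> (\<integral>\<^sup>+z. 2 * ennreal (1 / (snd z - fst z)) \<partial>mixm)"
  proof (rule nn_integral_mono_AE)
    show "AE z in mixm. total_variation (unif_dens (fst z) (snd z)) \<le> 2 * ennreal (1 / (snd z - fst z))"
      using AE_pi
    proof (rule AE_mp)
      show "AE z in mixm. fst z < snd z \<longrightarrow> total_variation (unif_dens (fst z) (snd z)) \<le> 2 * ennreal (1 / (snd z - fst z))"
      proof (rule AE_I2, rule impI)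
        fix z :: "real \<times> real" assume z: "fst z < snd z"
        have "total_variation (unif_dens (fst z) (snd z)) \<le> ennreal (2 / (snd z - fst z))" by (rule tv_unif[OF z])
        also have "\<dots> = ennreal (2 * (1 / (snd z - fst z)))" by simp
        also have "\<dots> = ennreal 2 * ennreal (1 / (snd z - fst z))" using z by (intro ennreal_mult) auto
        also have "\<dots> = 2 * ennreal (1 / (snd z - fst z))" by simp
        finally show "total_variation (unif_dens (fst z) (snd z)) \<le> 2 * ennreal (1 / (snd z - fst z))" .
      qed
    qed
  qed
  also have "\<dots> = 2 * (\<integral>\<^sup>+z. ennreal (1 / (snd z - fst z)) \<partial>mixm)"
    by (rule nn_integral_cmult) (use inv_meas in \<open>simp add: measurable_cong_sets[OF sets_pi refl]\<close>)
  finally show ?thesis .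
qed

lemma TV_lower_pi: "total_variation p \<le> (\<integral>\<^sup>+z. total_variation (unif_dens (fst z) (snd z)) \<partial>mixm)"
proof (rule tv_lower[where G=G])
  show "(\<lambda>z. unif_dens (fst z) (snd z) x) \<in> borel_measurable mixm" for x
    using unif_meas by (simp add: measurable_cong_sets[OF sets_pi refl])
  show "unif_dens (fst z) (snd z) x \<ge> 0" for z x by (rule unif_nonneg)
  show "p x \<ge> 0" for x by (rule nonneg)
  show "ennreal (p x) = (\<integral>\<^sup>+z. ennreal (unif_dens (fst z) (snd z) x) \<partial>mixm)" if "x \<in> G" for x
    by (rule mix[OF that])
  show "countable (- G)" by (rule G_co)
  show "tv_normalized p" by (rule norm)
qed

lemma main:
  "\<exists>\<pi> :: (real \<times> real) measure.
           sets \<pi> = sets borel \<and> prob_space \<pi> \<and>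
           (AE z in \<pi>. fst z < snd z) \<and>
           (AE x in lborel. ennreal (p x) =
              (\<integral>\<^sup>+ z. ennreal (unif_dens (fst z) (snd z) x) \<partial>\<pi>)) \<and>
           total_variation p = (\<integral>\<^sup>+ z. total_variation (unif_dens (fst z) (snd z)) \<partial>\<pi>) \<and>
           total_variation p = 2 * (\<integral>\<^sup>+ z. ennreal (1 / (snd z - fst z)) \<partial>\<pi>)"
proof (intro exI[of _ mixm] conjI)
  show "sets mixm = sets borel" by (rule sets_pi)
  show "prob_space mixm" by (rule prob_pi)
  show "AE z in mixm. fst z < snd z" by (rule AE_pi)
  show "AE x in lborel. ennreal (p x) = (\<integral>\<^sup>+ z. ennreal (unif_dens (fst z) (snd z) x) \<partial>mixm)"
    by (rule AE_I'[OF countable_imp_null_set_lborel[OF G_co]]) (auto intro: mix)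
  have c1: "total_variation p \<le> (\<integral>\<^sup>+z. total_variation (unif_dens (fst z) (snd z)) \<partial>mixm)" by (rule TV_lower_pi)
  have c2: "(\<integral>\<^sup>+z. total_variation (unif_dens (fst z) (snd z)) \<partial>mixm) \<le> 2 * (\<integral>\<^sup>+z. ennreal (1 / (snd z - fst z)) \<partial>mixm)"
    by (rule tvq_int)
  have "2 * (\<integral>\<^sup>+z. ennreal (1 / (snd z - fst z)) \<partial>mixm) \<le> 2 * ennreal (T - P0)"
    using inv_int by (rule mult_left_mono) simp
  also have "\<dots> = ennreal 2 * ennreal (T - P0)" by simp
  also have "\<dots> = ennreal (2 * (T - P0))" using P0_le_T by (intro ennreal_mult[symmetric]) auto
  also have "\<dots> \<le> ennreal V" using T_le P0_nonneg by (intro ennreal_leI) simp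
  also have "\<dots> = total_variation p" by (rule TV_eq[symmetric])
  finally have c3: "2 * (\<integral>\<^sup>+z. ennreal (1 / (snd z - fst z)) \<partial>mixm) \<le> total_variation p" .
  show "total_variation p = (\<integral>\<^sup>+ z. total_variation (unif_dens (fst z) (snd z)) \<partial>mixm)"
    using c1 c2 c3 by (rule antisym[OF _ order_trans])
  show "total_variation p = 2 * (\<integral>\<^sup>+ z. ennreal (1 / (snd z - fst z)) \<partial>mixm)"
    using c1 c2 c3 by (rule antisym[OF order_trans])
qed

end

theorem lemma4p3:
  fixes p :: "real \<Rightarrow> real"
  assumes meas: "p \<in> borel_measurable borel"
    and nonneg: "\<And>x. p x \<ge> 0"
    and total: "(\<integral>\<^sup>+ x. ennreal (p x) \<partial>lborel) = 1"
    and norm: "tv_normalized p"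
    and bv: "total_variation p < \<infinity>"
  shows "\<exists>\<pi> :: (real \<times> real) measure.
           sets \<pi> = sets borel \<and> prob_space \<pi> \<and>
           (AE z in \<pi>. fst z < snd z) \<and>
           (AE x in lborel. ennreal (p x) =
              (\<integral>\<^sup>+ z. ennreal (unif_dens (fst z) (snd z) x) \<partial>\<pi>)) \<and>
           total_variation p = (\<integral>\<^sup>+ z. total_variation (unif_dens (fst z) (snd z)) \<partial>\<pi>) \<and>
           total_variation p = 2 * (\<integral>\<^sup>+ z. ennreal (1 / (snd z - fst z)) \<partial>\<pi>)"
  by (rule main[OF meas nonneg total norm bv])

end
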